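(* Let $X\subseteq\mathbb R^2$ be a nonempty compact set. If the Riesz space $\mathcal R(X)$ has a principal ideal that is not an intersection of maximal ideals of $\mathcal R(X)$, then $X$ has an outgoing Severi–Bouligand tangent at some point $x\in X$.
   Context: Severi–Bouligand tangent: for $\emptyset\ne X\subseteq\mathbb R^n$ and $x\in\mathbb R^n$, a unit vector $u$ is a Severi–Bouligand tangent of $X$ at $x$ if $X$ contains a sequence $\{x_i\}$ with $x_i\neq x$ for all $i$, $x_i\to x$, and $(x_i-x)/\|x_i-x\|\to u$. It is outgoing if in addition $\operatorname{conv}(x,x+\mu u)\cap X=\{x\}$ for some $\mu>0$. $\mathcal R(X)$: for a nonempty compact $X\subseteq\mathbb R^n$, choose a closed $n$-cube $K\supseteq X$; a function $g\colon K\to\mathbb R$ is piecewise linear if there is a (finite) triangulation $\Delta$ of $K$ such that $g$ is continuous and affine linear on each simplex of $\Delta$. $\mathcal R(X)$ is the set of restrictions to $X$ of piecewise linear functions on $K$ (independent of the choice of $K$), a Riesz space (vector lattice) under pointwise operations. The principal ideal generated by $g$ is $\{f\in\mathcal R(X): |f|\le m|g| \text{ for some } m\in\mathbb N\}$. *)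

theory Defs
  imports "HOL-Analysis.Analysis"
begin

definition SB_tangent :: "(real^2) set \<Rightarrow> real^2 \<Rightarrow> real^2 \<Rightarrow> bool" where
  "SB_tangent X x u \<longleftrightarrow> norm u = 1 \<and>
     (\<exists>s :: nat \<Rightarrow> real^2. (\<forall>i. s i \<in> X \<and> s i \<noteq> x) \<and> s \<longlonglongrightarrow> x \<and>
        (\<lambda>i. (1 / norm (s i - x)) *\<^sub>R (s i - x)) \<longlonglongrightarrow> u)"

definition outgoing_SB_tangent :: "(real^2) set \<Rightarrow> real^2 \<Rightarrow> real^2 \<Rightarrow> bool" where
  "outgoing_SB_tangent X x u \<longleftrightarrow> SB_tangent X x u \<and>
     (\<exists>\<mu>>0. closed_segment x (x + \<mu> *\<^sub>R u) \<inter> X = {x})"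

definition closed_cube :: "(real^2) set \<Rightarrow> bool" where
  "closed_cube K \<longleftrightarrow> (\<exists>a d. d > 0 \<and> K = cbox a (a + (\<chi> i. d)))"

definition piecewise_linear_on :: "(real^2) set \<Rightarrow> (real^2 \<Rightarrow> real) \<Rightarrow> bool" where
  "piecewise_linear_on K g \<longleftrightarrow>
     (\<exists>\<T>. triangulation \<T> \<and> \<Union>\<T> = K \<and> continuous_on K g \<and>
        (\<forall>T\<in>\<T>. \<exists>(c::real^2) (b::real). \<forall>y\<in>T. g y = c \<bullet> y + b))"

text \<open>R(X): restrictions to X of piecewise linear functions on a closed cube containing X.
  Functions are normalised to be 0 outside X, so that elements of R(X) are determined
  by their values on X.\<close>
definition RX :: "(real^2) set \<Rightarrow> (real^2 \<Rightarrow> real) set" where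
  "RX X = {f. \<exists>K g. closed_cube K \<and> X \<subseteq> K \<and> piecewise_linear_on K g \<and>
                    (\<forall>y. f y = (if y \<in> X then g y else 0))}"

definition riesz_ideal :: "(real^2) set \<Rightarrow> (real^2 \<Rightarrow> real) set \<Rightarrow> bool" where
  "riesz_ideal X I \<longleftrightarrow> I \<subseteq> RX X \<and> (\<lambda>y. 0) \<in> I \<and>
     (\<forall>f\<in>I. \<forall>g\<in>I. (\<lambda>y. f y + g y) \<in> I) \<and> (\<forall>f\<in>I. \<forall>c::real. (\<lambda>y. c * f y) \<in> I) \<and>
     (\<forall>f\<in>RX X. \<forall>g\<in>I. (\<forall>y\<in>X. \<bar>f y\<bar> \<le> \<bar>g y\<bar>) \<longrightarrow> f \<in> I)"

definition maximal_ideal :: "(real^2) set \<Rightarrow> (real^2 \<Rightarrow> real) set \<Rightarrow> bool" where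
  "maximal_ideal X M \<longleftrightarrow> riesz_ideal X M \<and> M \<noteq> RX X \<and>
     (\<forall>J. riesz_ideal X J \<and> M \<subseteq> J \<longrightarrow> J = M \<or> J = RX X)"

definition principal_ideal :: "(real^2) set \<Rightarrow> (real^2 \<Rightarrow> real) \<Rightarrow> (real^2 \<Rightarrow> real) set" where
  "principal_ideal X g = {f \<in> RX X. \<exists>m::nat. \<forall>y\<in>X. \<bar>f y\<bar> \<le> real m * \<bar>g y\<bar>}"

text \<open>I is an intersection of maximal ideals (intersection taken inside R(X), so the
  empty family yields R(X)).\<close>
definition inter_of_maximal_ideals :: "(real^2) set \<Rightarrow> (real^2 \<Rightarrow> real) set \<Rightarrow> bool" where
  "inter_of_maximal_ideals X I \<longleftrightarrow>
     (\<exists>\<M>. (\<forall>M\<in>\<M>. maximal_ideal X M) \<and> I = RX X \<inter> \<Inter>\<M>)"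

end

theory Submission
  imports Defs
begin


definition cellcx :: "(real^2) set set \<Rightarrow> bool" where
  "cellcx \<M> \<longleftrightarrow> finite \<M> \<and> (\<forall>C\<in>\<M>. polytope C) \<and> (\<forall>C1\<in>\<M>. \<forall>C2\<in>\<M>. C1 \<inter> C2 face_of C1)"

definition PLC :: "(real^2) set \<Rightarrow> (real^2 \<Rightarrow> real) \<Rightarrow> bool" where
  "PLC U G \<longleftrightarrow> (\<exists>\<M>. cellcx \<M> \<and> \<Union>\<M> = U \<and> continuous_on U G \<and>
      (\<forall>C\<in>\<M>. \<exists>(c::real^2) (b::real). \<forall>y\<in>C. G y = c \<bullet> y + b))"

lemma simplex_polytope: "n simplex T \<Longrightarrow> polytope T"
  by (auto simp: simplex polytope_def)

lemma PL_imp_PLC: "piecewise_linear_on K G \<Longrightarrow> PLC K G"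

proof -
  assume "piecewise_linear_on K G"
  then obtain \<T> where T: "triangulation \<T>" "\<Union>\<T> = K" "continuous_on K G"
        "\<forall>T\<in>\<T>. \<exists>(c::real^2) (b::real). \<forall>y\<in>T. G y = c \<bullet> y + b"
    unfolding piecewise_linear_on_def by blast
  have "cellcx \<T>" using T(1) simplex_polytope unfolding triangulation_def cellcx_def by blast
  then show ?thesis unfolding PLC_def using T by blast
qed

lemma PLC_imp_PL: assumes "PLC K G" shows "piecewise_linear_on K G"
proof -
  obtain \<M> where M: "cellcx \<M>" "\<Union>\<M> = K" "continuous_on K G"
     "\<forall>C\<in>\<M>. \<exists>(c::real^2) (b::real). \<forall>y\<in>C. G y = c \<bullet> y + b"
    using assms unfolding PLC_def by blast
  have fin: "finite \<M>" and pol: "\<And>C. C \<in> \<M> \<Longrightarrow> polytope C"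
    and fc: "\<And>C1 C2. \<lbrakk>C1 \<in> \<M>; C2 \<in> \<M>\<rbrakk> \<Longrightarrow> C1 \<inter> C2 face_of C1"
    using M(1) unfolding cellcx_def by auto
  show ?thesis
  proof (rule simplicial_subdivision_of_cell_complex[OF fin pol fc])
    fix \<T> assume T: "simplicial_complex \<T>" "\<Union>\<T> = \<Union>\<M>"
     "\<And>C. C \<in> \<M> \<Longrightarrow> \<exists>F. finite F \<and> F \<subseteq> \<T> \<and> C = \<Union>F"
     "\<And>K. K \<in> \<T> \<Longrightarrow> \<exists>C. C \<in> \<M> \<and> K \<subseteq> C"
    have "triangulation \<T>" using T(1) unfolding simplicial_complex_def triangulation_def by blast
    moreover have "\<forall>T\<in>\<T>. \<exists>(c::real^2) (b::real). \<forall>y\<in>T. G y = c \<bullet> y + b"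
    proof
      fix T assume "T \<in> \<T>"
      then obtain C where "C \<in> \<M>" "T \<subseteq> C" using T(4) by blast
      then obtain c b where "\<forall>y\<in>C. G y = c \<bullet> y + b" using M(4) by blast
      then show "\<exists>(c::real^2) (b::real). \<forall>y\<in>T. G y = c \<bullet> y + b" using \<open>T \<subseteq> C\<close> by blast
    qed
    ultimately show ?thesis unfolding piecewise_linear_on_def using T(2) M(2,3) by blast
  qed
qed

lemma PLC_add: assumes "PLC U F" "PLC U H" shows "PLC U (\<lambda>y. F y + H y)"
proof -
  obtain \<M> where M: "cellcx \<M>" "\<Union>\<M> = U" "continuous_on U F"
     "\<forall>C\<in>\<M>. \<exists>(c::real^2) (b::real). \<forall>y\<in>C. F y = c \<bullet> y + b"
    using assms(1) unfolding PLC_def by blast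
  obtain \<N> where N: "cellcx \<N>" "\<Union>\<N> = U" "continuous_on U H"
     "\<forall>C\<in>\<N>. \<exists>(c::real^2) (b::real). \<forall>y\<in>C. H y = c \<bullet> y + b"
    using assms(2) unfolding PLC_def by blast
  define \<P> where "\<P> = (\<lambda>(C,D). C \<inter> D) ` (\<M> \<times> \<N>)"
  have "cellcx \<P>"
    unfolding cellcx_def
  proof (intro conjI ballI)
    show "finite \<P>" using M(1) N(1) by (simp add: \<P>_def cellcx_def)
  next
    fix P assume "P \<in> \<P>" then show "polytope P"
      using M(1) N(1) by (auto simp: \<P>_def cellcx_def intro: polytope_Int)
  next
    fix P1 P2 assume "P1 \<in> \<P>" "P2 \<in> \<P>"
    then obtain C1 D1 C2 D2 where "C1 \<in> \<M>" "C2 \<in> \<M>" "D1 \<in> \<N>" "D2 \<in> \<N>"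
      "P1 = C1 \<inter> D1" "P2 = C2 \<inter> D2" by (auto simp: \<P>_def)
    moreover have "(C1 \<inter> C2) \<inter> (D1 \<inter> D2) face_of C1 \<inter> D1"
      by (rule face_of_Int_Int) (use M(1) N(1) calculation in \<open>auto simp: cellcx_def\<close>)
    ultimately show "P1 \<inter> P2 face_of P1" by (simp add: Int_ac)
  qed
  moreover have "\<Union>\<P> = U" using M(2) N(2) by (auto simp: \<P>_def)
  moreover have "continuous_on U (\<lambda>y. F y + H y)" using M(3) N(3) by (rule continuous_on_add)
  moreover have "\<forall>P\<in>\<P>. \<exists>(c::real^2) (b::real). \<forall>y\<in>P. F y + H y = c \<bullet> y + b"
  proof
    fix P assume "P \<in> \<P>"
    then obtain C D where "C \<in> \<M>" "D \<in> \<N>" "P = C \<inter> D" by (auto simp: \<P>_def)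
    then obtain c b c' b' where "\<forall>y\<in>C. F y = c \<bullet> y + b" "\<forall>y\<in>D. H y = c' \<bullet> y + b'"
      using M(4) N(4) by meson
    then have "\<forall>y\<in>P. F y + H y = (c + c') \<bullet> y + (b + b')"
      using \<open>P = C \<inter> D\<close> by (auto simp: inner_add_left)
    then show "\<exists>(c::real^2) (b::real). \<forall>y\<in>P. F y + H y = c \<bullet> y + b" by blast
  qed
  ultimately show ?thesis unfolding PLC_def by blast
qed

lemma PLC_scale: assumes "PLC U F" shows "PLC U (\<lambda>y. r * F y)"
proof -
  obtain \<M> where M: "cellcx \<M>" "\<Union>\<M> = U" "continuous_on U F"
     "\<forall>C\<in>\<M>. \<exists>(c::real^2) (b::real). \<forall>y\<in>C. F y = c \<bullet> y + b"
    using assms unfolding PLC_def by blast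
  have "\<forall>C\<in>\<M>. \<exists>(c::real^2) (b::real). \<forall>y\<in>C. r * F y = c \<bullet> y + b"
  proof
    fix C assume "C \<in> \<M>"
    then obtain c b where "\<forall>y\<in>C. F y = c \<bullet> y + b" using M(4) by meson
    then have "\<forall>y\<in>C. r * F y = (r *\<^sub>R c) \<bullet> y + r * b" by (simp add: algebra_simps)
    then show "\<exists>(c::real^2) (b::real). \<forall>y\<in>C. r * F y = c \<bullet> y + b" by blast
  qed
  moreover have "continuous_on U (\<lambda>y. r * F y)" using continuous_on_mult[OF continuous_on_const M(3)] by simp
  ultimately show ?thesis using M unfolding PLC_def by blast
qed

lemma PLC_const: assumes "polytope K" shows "PLC K (\<lambda>y. r)"
  unfolding PLC_def
proof (intro exI conjI)
  show "cellcx {K}" using assms by (simp add: cellcx_def face_of_refl polytope_imp_convex)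
  show "\<Union>{K} = K" by simp
  show "continuous_on K (\<lambda>y. r)" by (rule continuous_on_const)
  show "\<forall>C\<in>{K}. \<exists>(c::real^2) (b::real). \<forall>y\<in>C. r = c \<bullet> y + b"
  proof
    fix C assume "C \<in> {K}"
    have "\<forall>y\<in>C. r = (0::real^2) \<bullet> y + r" by simp
    then show "\<exists>(c::real^2) (b::real). \<forall>y\<in>C. r = c \<bullet> y + b" by blast
  qed
qed


definition sl :: "real^2 \<Rightarrow> (real^2) set \<Rightarrow> (real^2) set" where
  "sl w A = (\<lambda>p. fst p + snd p *\<^sub>R w) ` (A \<times> {0..1})"

lemma sl_mem: "y \<in> sl w A \<longleftrightarrow> (\<exists>z t. z \<in> A \<and> 0 \<le> t \<and> t \<le> 1 \<and> y = z + t *\<^sub>R w)"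
  unfolding sl_def by force

lemma linear_slmap: "linear (\<lambda>p::((real^2) \<times> real). fst p + snd p *\<^sub>R w)"
  by (rule linearI) (auto simp: algebra_simps)

lemma polytope_sl: assumes "polytope A" shows "polytope (sl w A)"
proof -
  have "polytope {0..1::real}" using polytope_interval[of "0::real" 1] by simp
  then have "polytope (A \<times> {0..1::real})" using assms by (rule polytope_Times[rotated])
  then show ?thesis unfolding sl_def by (rule polytope_linear_image[OF linear_slmap])
qed

lemma convex_sl: assumes "convex A" shows "convex (sl w A)"
  unfolding sl_def
  by (rule convex_linear_image[OF linear_slmap convex_Times[OF assms convex_real_interval(5)]])

lemma inner_sl:
  assumes "z \<in> {y. n \<bullet> y = c0}" shows "n \<bullet> (z + t *\<^sub>R w) = c0 + t * (n \<bullet> w)"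
  using assms by (simp add: inner_add_right)

lemma sl_decomp_unique:
  assumes "n \<bullet> w \<noteq> 0" "n \<bullet> z = c0" "n \<bullet> z' = c0" "z + t *\<^sub>R w = z' + t' *\<^sub>R w"
  shows "t = t' \<and> z = z'"
proof -
  have "n \<bullet> (z + t *\<^sub>R w) = n \<bullet> (z' + t' *\<^sub>R w)" using assms(4) by simp
  then have "c0 + t * (n \<bullet> w) = c0 + t' * (n \<bullet> w)" using assms(2,3) by (simp add: inner_add_right)
  then have "t = t'" using assms(1) by simp
  then show ?thesis using assms(4) by simp
qed

lemma sl_Int:
  assumes "n \<bullet> w \<noteq> 0" "A \<subseteq> {y. n \<bullet> y = c0}" "A' \<subseteq> {y. n \<bullet> y = c0}"
  shows "sl w A \<inter> sl w A' = sl w (A \<inter> A')"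
proof
  show "sl w A \<inter> sl w A' \<subseteq> sl w (A \<inter> A')"
  proof
    fix y assume "y \<in> sl w A \<inter> sl w A'"
    then obtain z t z' t' where zt: "z \<in> A" "0 \<le> t" "t \<le> 1" "y = z + t *\<^sub>R w"
      and zt': "z' \<in> A'" "0 \<le> t'" "t' \<le> 1" "y = z' + t' *\<^sub>R w"
      unfolding Int_iff sl_mem by blast
    have "n \<bullet> z = c0" "n \<bullet> z' = c0" using zt(1) zt'(1) assms(2,3) by auto
    then have "t = t' \<and> z = z'" using sl_decomp_unique[OF assms(1)] zt(4) zt'(4) by metis
    then show "y \<in> sl w (A \<inter> A')" unfolding sl_mem using zt zt' by blast
  qed
next
  show "sl w (A \<inter> A') \<subseteq> sl w A \<inter> sl w A'" unfolding sl_def by blast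
qed

lemma sl_ge:
  assumes "n \<bullet> w > 0" "A \<subseteq> {y. n \<bullet> y = c0}" "y \<in> sl w A"
  shows "n \<bullet> y \<ge> c0"
proof -
  obtain z t where "z \<in> A" "0 \<le> t" "y = z + t *\<^sub>R w" using assms(3) unfolding sl_mem by blast
  then show ?thesis using assms(1,2) by (auto simp: inner_add_right)
qed

lemma sl_le:
  assumes "n \<bullet> w > 0" "A \<subseteq> {y. n \<bullet> y = c0}"
  shows "sl w A \<inter> {y. n \<bullet> y \<le> c0} = A"
proof
  show "sl w A \<inter> {y. n \<bullet> y \<le> c0} \<subseteq> A"
  proof
    fix y assume y: "y \<in> sl w A \<inter> {y. n \<bullet> y \<le> c0}"
    then obtain z t where zt: "z \<in> A" "0 \<le> t" "y = z + t *\<^sub>R w" unfolding Int_iff sl_mem by blast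
    have "n \<bullet> z = c0" using zt(1) assms(2) by auto
    then have "c0 + t * (n \<bullet> w) \<le> c0" using y zt(3) by (simp add: inner_add_right)
    moreover have "t * (n \<bullet> w) \<ge> 0" using zt(2) assms(1) by simp
    ultimately have "t * (n \<bullet> w) = 0" by linarith
    then have "t = 0" using assms(1) by simp
    then show "y \<in> A" using zt by simp
  qed
next
  show "A \<subseteq> sl w A \<inter> {y. n \<bullet> y \<le> c0}"
  proof
    fix y assume "y \<in> A"
    then have "n \<bullet> y \<le> c0" using assms(2) by auto
    moreover have "y \<in> sl w A" unfolding sl_mem
      by (rule exI[of _ y], rule exI[of _ 0]) (use \<open>y \<in> A\<close> in simp)
    ultimately show "y \<in> sl w A \<inter> {y. n \<bullet> y \<le> c0}" by simp
  qed
qed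

lemma sl_eq:
  assumes "n \<bullet> w > 0" "A \<subseteq> {y. n \<bullet> y = c0}"
  shows "sl w A \<inter> {y. n \<bullet> y = c0} = A"
proof -
  have "sl w A \<inter> {y. n \<bullet> y = c0} \<subseteq> sl w A \<inter> {y. n \<bullet> y \<le> c0}" by auto
  moreover have "A \<subseteq> {y. n \<bullet> y = c0}" by (rule assms(2))
  ultimately show ?thesis using sl_le[OF assms] by blast
qed

lemma sl_face:
  assumes nw: "n \<bullet> w \<noteq> 0" and AE: "A \<subseteq> {y. n \<bullet> y = c0}" and F: "F face_of A"
  shows "sl w F face_of sl w A"
  unfolding face_of_def
proof (intro conjI ballI impI)
  have FA: "F \<subseteq> A" using F face_of_imp_subset by blast
  then show "sl w F \<subseteq> sl w A" unfolding sl_def by blast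
  show "convex (sl w F)" using F face_of_imp_convex convex_sl by blast
  fix a b x assume a: "a \<in> sl w A" and b: "b \<in> sl w A" and x: "x \<in> sl w F"
    and seg: "x \<in> open_segment a b"
  obtain za ta where za: "za \<in> A" "0 \<le> ta" "ta \<le> 1" "a = za + ta *\<^sub>R w" using a unfolding sl_mem by blast
  obtain zb tb where zb: "zb \<in> A" "0 \<le> tb" "tb \<le> 1" "b = zb + tb *\<^sub>R w" using b unfolding sl_mem by blast
  obtain zx tx where zx: "zx \<in> F" "0 \<le> tx" "tx \<le> 1" "x = zx + tx *\<^sub>R w" using x unfolding sl_mem by blast
  obtain u where u: "0 < u" "u < 1" "x = (1 - u) *\<^sub>R a + u *\<^sub>R b" using seg unfolding in_segment by blast
  have nza: "n \<bullet> za = c0" and nzb: "n \<bullet> zb = c0" and nzx: "n \<bullet> zx = c0"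
    using za(1) zb(1) zx(1) FA AE by auto
  define zm where "zm = (1 - u) *\<^sub>R za + u *\<^sub>R zb"
  define tm where "tm = (1 - u) * ta + u * tb"
  have xm: "x = zm + tm *\<^sub>R w" unfolding zm_def tm_def using u(3) za(4) zb(4)
    by (simp add: algebra_simps)
  have nzm: "n \<bullet> zm = c0" unfolding zm_def using nza nzb by (simp add: inner_add_right algebra_simps)
  have "tx = tm \<and> zx = zm" using sl_decomp_unique[OF nw nzx nzm] zx(4) xm by metis
  then have zxm: "zx = zm" by blast
  have "za \<in> F \<and> zb \<in> F"
  proof (cases "za = zb")
    case True
    then have "zx = za" using zxm unfolding zm_def by (simp add: algebra_simps)
    then show ?thesis using zx(1) True by simp
  next
    case False
    then have "zx \<in> open_segment za zb" unfolding in_segment using u zxm zm_def by blast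
    then show ?thesis using face_ofD[OF F _ za(1) zb(1) zx(1)] by blast
  qed
  then show "a \<in> sl w F" "b \<in> sl w F" unfolding sl_mem using za zb by blast+
qed


lemma fc1:
  assumes nw: "n \<bullet> w > 0" and C: "convex C" and C'le: "C' \<subseteq> {y. n \<bullet> y \<le> c0}"
    and CC': "C \<inter> C' face_of C"
  shows "sl w (C \<inter> {y. n \<bullet> y = c0}) \<inter> C' face_of sl w (C \<inter> {y. n \<bullet> y = c0})"
proof -
  let ?E = "{y. n \<bullet> y = c0}"
  have sub: "C \<inter> ?E \<subseteq> ?E" by blast
  have "sl w (C \<inter> ?E) \<inter> C' = (sl w (C \<inter> ?E) \<inter> {y. n \<bullet> y \<le> c0}) \<inter> C'" using C'le by blast
  also have "\<dots> = (C \<inter> C') \<inter> ?E" unfolding sl_le[OF nw sub] by blast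
  finally have eq: "sl w (C \<inter> ?E) \<inter> C' = (C \<inter> C') \<inter> ?E" .
  have f1: "(C \<inter> C') \<inter> ?E face_of C \<inter> ?E" by (rule face_of_slice[OF CC' convex_hyperplane])
  have cs: "convex (sl w (C \<inter> ?E))" by (rule convex_sl[OF convex_Int[OF C convex_hyperplane]])
  have "sl w (C \<inter> ?E) \<inter> ?E face_of sl w (C \<inter> ?E)"
    by (rule face_of_Int_supporting_hyperplane_ge[OF cs]) (use sl_ge[OF nw sub] in blast)
  then have f2: "C \<inter> ?E face_of sl w (C \<inter> ?E)" using sl_eq[OF nw sub] by simp
  show ?thesis unfolding eq by (rule face_of_trans[OF f1 f2])
qed

lemma fc2:
  assumes C': "convex C'" and C'le: "C' \<subseteq> {y. n \<bullet> y \<le> c0}"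
    and CC': "C' \<inter> C face_of C'" and nw: "n \<bullet> w > 0"
  shows "C' \<inter> sl w (C \<inter> {y. n \<bullet> y = c0}) face_of C'"
proof -
  let ?E = "{y. n \<bullet> y = c0}"
  have sub: "C \<inter> ?E \<subseteq> ?E" by blast
  have "C' \<inter> sl w (C \<inter> ?E) = C' \<inter> (sl w (C \<inter> ?E) \<inter> {y. n \<bullet> y \<le> c0})" using C'le by blast
  also have "\<dots> = (C' \<inter> C) \<inter> (C' \<inter> ?E)" unfolding sl_le[OF nw sub] by blast
  finally have eq: "C' \<inter> sl w (C \<inter> ?E) = (C' \<inter> C) \<inter> (C' \<inter> ?E)" .
  have "C' \<inter> ?E face_of C'"
    by (rule face_of_Int_supporting_hyperplane_le[OF C']) (use C'le in blast)
  then show ?thesis unfolding eq by (rule face_of_Int[OF CC'])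
qed

lemma fc3:
  assumes nw: "n \<bullet> w > 0" and CC': "C \<inter> C' face_of C"
  shows "sl w (C \<inter> {y. n \<bullet> y = c0}) \<inter> sl w (C' \<inter> {y. n \<bullet> y = c0})
           face_of sl w (C \<inter> {y. n \<bullet> y = c0})"
proof -
  let ?E = "{y. n \<bullet> y = c0}"
  have nw0: "n \<bullet> w \<noteq> 0" using nw by simp
  have eq: "sl w (C \<inter> ?E) \<inter> sl w (C' \<inter> ?E) = sl w ((C \<inter> C') \<inter> ?E)"
  proof -
    have "(C \<inter> ?E) \<inter> (C' \<inter> ?E) = (C \<inter> C') \<inter> ?E" by blast
    moreover have "sl w (C \<inter> ?E) \<inter> sl w (C' \<inter> ?E) = sl w ((C \<inter> ?E) \<inter> (C' \<inter> ?E))"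
      by (rule sl_Int[OF nw0, of "C \<inter> ?E" c0 "C' \<inter> ?E"]) blast+
    ultimately show ?thesis by simp
  qed
  have f1: "(C \<inter> C') \<inter> ?E face_of C \<inter> ?E" by (rule face_of_slice[OF CC' convex_hyperplane])
  have sub: "C \<inter> ?E \<subseteq> ?E" by blast
  show ?thesis unfolding eq by (rule sl_face[OF nw0 sub f1])
qed

lemma proj_B: "n \<bullet> y \<le> c0 \<Longrightarrow> n \<bullet> w > 0 \<Longrightarrow>
   y - max 0 ((n \<bullet> y - c0) / (n \<bullet> w)) *\<^sub>R w = y"
  by (simp add: divide_nonpos_pos)

lemma proj_sl: assumes "n \<bullet> z = c0" "0 \<le> t" "n \<bullet> w > 0"
  shows "max 0 ((n \<bullet> (z + t *\<^sub>R w) - c0) / (n \<bullet> w)) = t"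
    and "(z + t *\<^sub>R w) - max 0 ((n \<bullet> (z + t *\<^sub>R w) - c0) / (n \<bullet> w)) *\<^sub>R w = z"
proof -
  have "(n \<bullet> (z + t *\<^sub>R w) - c0) / (n \<bullet> w) = t" using assms by (simp add: inner_add_right)
  then show "max 0 ((n \<bullet> (z + t *\<^sub>R w) - c0) / (n \<bullet> w)) = t" using assms(2) by simp
  then show "(z + t *\<^sub>R w) - max 0 ((n \<bullet> (z + t *\<^sub>R w) - c0) / (n \<bullet> w)) *\<^sub>R w = z" by simp
qed

lemma PLC_ext:
  fixes B :: "(real^2) set" and n w :: "real^2" and c0 :: real
  assumes G: "PLC B G" and Bn: "\<forall>y\<in>B. n \<bullet> y \<le> c0" and nw: "n \<bullet> w > 0"
  shows "PLC (B \<union> sl w (B \<inter> {y. n \<bullet> y = c0}))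
              (\<lambda>y. G (y - max 0 ((n \<bullet> y - c0) / (n \<bullet> w)) *\<^sub>R w))"
proof -
  let ?E = "{y. n \<bullet> y = c0}"
  define P where "P = (\<lambda>y. y - max 0 ((n \<bullet> y - c0) / (n \<bullet> w)) *\<^sub>R w)"
  obtain \<M> where M: "cellcx \<M>" "\<Union>\<M> = B" "continuous_on B G"
     "\<forall>C\<in>\<M>. \<exists>(c::real^2) (b::real). \<forall>y\<in>C. G y = c \<bullet> y + b"
    using G unfolding PLC_def by blast
  have fin: "finite \<M>" and pol: "\<And>C. C \<in> \<M> \<Longrightarrow> polytope C"
    and fc: "\<And>C1 C2. \<lbrakk>C1 \<in> \<M>; C2 \<in> \<M>\<rbrakk> \<Longrightarrow> C1 \<inter> C2 face_of C1"
    using M(1) unfolding cellcx_def by auto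
  have Cle: "\<And>C. C \<in> \<M> \<Longrightarrow> C \<subseteq> {y. n \<bullet> y \<le> c0}" using M(2) Bn by blast
  have cvx: "\<And>C. C \<in> \<M> \<Longrightarrow> convex C" using pol polytope_imp_convex by blast
  define \<N> where "\<N> = \<M> \<union> (\<lambda>C. sl w (C \<inter> ?E)) ` \<M>"
  have "cellcx \<N>"
    unfolding cellcx_def
  proof (intro conjI ballI)
    show "finite \<N>" unfolding \<N>_def using fin by simp
  next
    fix C assume "C \<in> \<N>"
    then show "polytope C" unfolding \<N>_def
      using pol polytope_sl polytope_Int_polyhedron polyhedron_hyperplane by blast
  next
    fix C1 C2 assume C1: "C1 \<in> \<N>" and C2: "C2 \<in> \<N>"
    show "C1 \<inter> C2 face_of C1"
    proof (cases "C1 \<in> \<M>")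
      case T1: True
      show ?thesis
      proof (cases "C2 \<in> \<M>")
        case True then show ?thesis using fc T1 by blast
      next
        case False
        then obtain C where C: "C \<in> \<M>" "C2 = sl w (C \<inter> ?E)" using C2 unfolding \<N>_def by blast
        show ?thesis unfolding C(2) by (rule fc2[OF cvx[OF T1] Cle[OF T1] fc[OF T1 C(1)] nw])
      qed
    next
      case F1: False
      then obtain C where C: "C \<in> \<M>" "C1 = sl w (C \<inter> ?E)" using C1 unfolding \<N>_def by blast
      show ?thesis
      proof (cases "C2 \<in> \<M>")
        case True show ?thesis unfolding C(2) by (rule fc1[OF nw cvx[OF C(1)] Cle[OF True] fc[OF C(1) True]])
      next
        case False
        then obtain C' where C': "C' \<in> \<M>" "C2 = sl w (C' \<inter> ?E)" using C2 unfolding \<N>_def by blast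
        show ?thesis unfolding C(2) C'(2) by (rule fc3[OF nw fc[OF C(1) C'(1)]])
      qed
    qed
  qed
  moreover have UN: "\<Union>\<N> = B \<union> sl w (B \<inter> ?E)"
  proof -
    have "\<Union>((\<lambda>C. sl w (C \<inter> ?E)) ` \<M>) = sl w (B \<inter> ?E)"
      unfolding sl_def M(2)[symmetric] by blast
    then show ?thesis unfolding \<N>_def using M(2) by blast
  qed
  moreover have "continuous_on (B \<union> sl w (B \<inter> ?E)) (\<lambda>y. G (P y))"
  proof (rule continuous_on_compose2[OF M(3)])
    show "continuous_on (B \<union> sl w (B \<inter> ?E)) P" unfolding P_def
    proof (intro continuous_on_diff continuous_on_id continuous_on_scaleR continuous_on_max
           continuous_on_const continuous_on_divide continuous_on_inner)
      show "\<forall>x\<in>B \<union> sl w (B \<inter> ?E). n \<bullet> w \<noteq> 0" using nw by simp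
    qed
    show "P ` (B \<union> sl w (B \<inter> ?E)) \<subseteq> B"
    proof
      fix x assume "x \<in> P ` (B \<union> sl w (B \<inter> ?E))"
      then obtain y where y: "y \<in> B \<union> sl w (B \<inter> ?E)" "x = P y" by blast
      show "x \<in> B"
      proof (cases "y \<in> B")
        case True then show ?thesis using y(2) proj_B[OF _ nw] Bn unfolding P_def by auto
      next
        case False
        then obtain z t where zt: "z \<in> B \<inter> ?E" "0 \<le> t" "y = z + t *\<^sub>R w"
          using y(1) False unfolding Un_iff sl_mem by blast
        then show ?thesis using y(2) proj_sl(2)[of n z c0 t w] nw unfolding P_def by auto
      qed
    qed
  qed
  moreover have "\<forall>C\<in>\<N>. \<exists>(c::real^2) (b::real). \<forall>y\<in>C. G (P y) = c \<bullet> y + b"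
  proof
    fix D assume "D \<in> \<N>"
    show "\<exists>(c::real^2) (b::real). \<forall>y\<in>D. G (P y) = c \<bullet> y + b"
    proof (cases "D \<in> \<M>")
      case True
      then obtain c b where cb: "\<forall>y\<in>D. G y = c \<bullet> y + b" using M(4) by blast
      have "\<forall>y\<in>D. G (P y) = c \<bullet> y + b"
      proof
        fix y assume "y \<in> D"
        then have "P y = y" unfolding P_def using proj_B[OF _ nw] Cle[OF True] by blast
        then show "G (P y) = c \<bullet> y + b" using cb \<open>y \<in> D\<close> by simp
      qed
      then show ?thesis by blast
    next
      case False
      then obtain C where C: "C \<in> \<M>" "D = sl w (C \<inter> ?E)" using \<open>D \<in> \<N>\<close> unfolding \<N>_def by blast
      then obtain c b where cb: "\<forall>y\<in>C. G y = c \<bullet> y + b" using M(4) by blast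
      define c' where "c' = c - ((c \<bullet> w) / (n \<bullet> w)) *\<^sub>R n"
      define b' where "b' = b + c0 * (c \<bullet> w) / (n \<bullet> w)"
      have "\<forall>y\<in>D. G (P y) = c' \<bullet> y + b'"
      proof
        fix y assume "y \<in> D"
        then have "y \<in> sl w (C \<inter> ?E)" using C(2) by simp
        then obtain z t where zt: "z \<in> C \<inter> ?E" "0 \<le> t" "y = z + t *\<^sub>R w"
          unfolding sl_mem by blast
        have nz: "n \<bullet> z = c0" using zt(1) by simp
        have Py: "P y = z" unfolding P_def zt(3) by (rule proj_sl(2)[OF nz zt(2) nw])
        have tt: "(n \<bullet> y - c0) / (n \<bullet> w) = t" using nz nw unfolding zt(3) by (simp add: inner_add_right)
        have "G (P y) = c \<bullet> z + b" using Py cb zt(1) by simp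
        also have "z = y - ((n \<bullet> y - c0) / (n \<bullet> w)) *\<^sub>R w" unfolding tt using zt(3) by simp
        also have "c \<bullet> (y - ((n \<bullet> y - c0) / (n \<bullet> w)) *\<^sub>R w) + b = c' \<bullet> y + b'"
          unfolding c'_def b'_def using nw
          by (simp add: inner_diff_left inner_diff_right field_simps)
        finally show "G (P y) = c' \<bullet> y + b'" .
      qed
      then show ?thesis by blast
    qed
  qed
  ultimately show ?thesis unfolding PLC_def P_def by blast
qed


lemma axis_comp: "(axis k (1::real)) $ i = (if i = k then 1 else 0)"
  by (simp add: axis_def)

lemma box_up:
  fixes lo hi :: "real^2" and k :: 2 and \<beta> :: real
  assumes G: "PLC (cbox lo hi) G" and le: "hi$k \<le> \<beta>" and ord: "\<forall>i. lo$i \<le> hi$i"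
  shows "\<exists>G'. PLC (cbox lo (\<chi> i. if i = k then \<beta> else hi$i)) G' \<and> (\<forall>y\<in>cbox lo hi. G' y = G y)"
proof (cases "hi$k = \<beta>")
  case True
  have "(\<chi> i. if i = k then \<beta> else hi$i) = hi" using True by (simp add: vec_eq_iff)
  then show ?thesis using G by auto
next
  case False
  then have lt: "hi$k < \<beta>" using le by simp
  define n where "n = axis k (1::real)"
  define w where "w = (\<beta> - hi$k) *\<^sub>R axis k (1::real)"
  define c0 where "c0 = hi$k"
  have nw: "n \<bullet> w > 0" unfolding n_def w_def using lt by (simp add: inner_axis_axis)
  have ny: "\<And>y. n \<bullet> y = y$k" unfolding n_def by (simp add: inner_axis')
  have wi: "\<And>i. w$i = (if i = k then \<beta> - hi$k else 0)" unfolding w_def by (simp add: axis_def)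
  have Bn: "\<forall>y\<in>cbox lo hi. n \<bullet> y \<le> c0" unfolding ny c0_def by (simp add: mem_box_cart)
  have P: "PLC (cbox lo hi \<union> sl w (cbox lo hi \<inter> {y. n \<bullet> y = c0}))
              (\<lambda>y. G (y - max 0 ((n \<bullet> y - c0) / (n \<bullet> w)) *\<^sub>R w))"
    by (rule PLC_ext[OF G Bn nw])
  have eq: "cbox lo hi \<union> sl w (cbox lo hi \<inter> {y. n \<bullet> y = c0}) = cbox lo (\<chi> i. if i = k then \<beta> else hi$i)"
  proof
    show "cbox lo hi \<union> sl w (cbox lo hi \<inter> {y. n \<bullet> y = c0}) \<subseteq> cbox lo (\<chi> i. if i = k then \<beta> else hi$i)"
    proof
      fix y assume "y \<in> cbox lo hi \<union> sl w (cbox lo hi \<inter> {y. n \<bullet> y = c0})"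
      then consider "y \<in> cbox lo hi" | z t where "z \<in> cbox lo hi" "z$k = hi$k" "0 \<le> t" "t \<le> 1" "y = z + t *\<^sub>R w"
        unfolding Un_iff sl_mem Int_iff mem_Collect_eq ny c0_def by blast
      then show "y \<in> cbox lo (\<chi> i. if i = k then \<beta> else hi$i)"
      proof cases
        case 1 then show ?thesis using le unfolding mem_box_cart by (auto simp: vec_lambda_beta) (meson order_trans)
      next
        case 2
        have "\<forall>i. lo$i \<le> y$i \<and> y$i \<le> (if i = k then \<beta> else hi$i)"
        proof
          fix i
          have zi: "lo$i \<le> z$i" "z$i \<le> hi$i" using 2(1) unfolding mem_box_cart by auto
          show "lo$i \<le> y$i \<and> y$i \<le> (if i = k then \<beta> else hi$i)"
          proof (cases "i = k")
            case True
            have "y$i = hi$k + t * (\<beta> - hi$k)" using 2 True wi by simp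
            moreover have "t * (\<beta> - hi$k) \<le> 1 * (\<beta> - hi$k)" using 2(4) lt by (intro mult_right_mono) auto
            moreover have "t * (\<beta> - hi$k) \<ge> 0" using 2(3) lt by simp
            ultimately show ?thesis using zi True by auto
          next
            case False
            then have "y$i = z$i" using 2 wi by simp
            then show ?thesis using zi False by simp
          qed
        qed
        then show ?thesis unfolding mem_box_cart by simp
      qed
    qed
  next
    show "cbox lo (\<chi> i. if i = k then \<beta> else hi$i) \<subseteq> cbox lo hi \<union> sl w (cbox lo hi \<inter> {y. n \<bullet> y = c0})"
    proof
      fix y assume y: "y \<in> cbox lo (\<chi> i. if i = k then \<beta> else hi$i)"
      then have yi: "\<And>i. lo$i \<le> y$i \<and> y$i \<le> (if i = k then \<beta> else hi$i)" unfolding mem_box_cart by auto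
      show "y \<in> cbox lo hi \<union> sl w (cbox lo hi \<inter> {y. n \<bullet> y = c0})"
      proof (cases "y$k \<le> hi$k")
        case True
        have "y \<in> cbox lo hi" unfolding mem_box_cart
        proof
          fix i show "lo$i \<le> y$i \<and> y$i \<le> hi$i" using yi[of i] True by (cases "i = k") auto
        qed
        then show ?thesis by blast
      next
        case False
        define t where "t = (y$k - hi$k) / (\<beta> - hi$k)"
        define z where "z = y - t *\<^sub>R w"
        have t01: "0 \<le> t" "t \<le> 1" unfolding t_def using False lt yi[of k] by (auto simp: divide_le_eq_1)
        have zk: "z$k = hi$k" unfolding z_def t_def using lt wi by (simp add: field_simps)
        have zi: "\<And>i. i \<noteq> k \<Longrightarrow> z$i = y$i" unfolding z_def using wi by simp
        have zB: "z \<in> cbox lo hi" unfolding mem_box_cart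
        proof
          fix i show "lo$i \<le> z$i \<and> z$i \<le> hi$i"
          proof (cases "i = k")
            case True then show ?thesis using zk yi[of k] False ord by auto
          next
            case F: False then show ?thesis using zi[OF F] yi[of i] by auto
          qed
        qed
        have "z \<in> cbox lo hi \<inter> {y. n \<bullet> y = c0}" using zB zk unfolding ny c0_def by simp
        moreover have "y = z + t *\<^sub>R w" unfolding z_def by simp
        ultimately have "y \<in> sl w (cbox lo hi \<inter> {y. n \<bullet> y = c0})" unfolding sl_mem using t01 by blast
        then show ?thesis by blast
      qed
    qed
  qed
  have agree: "\<forall>y\<in>cbox lo hi. G (y - max 0 ((n \<bullet> y - c0) / (n \<bullet> w)) *\<^sub>R w) = G y"
  proof
    fix y assume "y \<in> cbox lo hi"
    then have "n \<bullet> y \<le> c0" using Bn by blast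
    then have "y - max 0 ((n \<bullet> y - c0) / (n \<bullet> w)) *\<^sub>R w = y" by (rule proj_B[OF _ nw])
    then show "G (y - max 0 ((n \<bullet> y - c0) / (n \<bullet> w)) *\<^sub>R w) = G y" by (rule arg_cong[where f=G])
  qed
  show ?thesis using P agree unfolding eq by blast
qed

lemma box_down:
  fixes lo hi :: "real^2" and k :: 2 and \<alpha> :: real
  assumes G: "PLC (cbox lo hi) G" and le: "\<alpha> \<le> lo$k" and ord: "\<forall>i. lo$i \<le> hi$i"
  shows "\<exists>G'. PLC (cbox (\<chi> i. if i = k then \<alpha> else lo$i) hi) G' \<and> (\<forall>y\<in>cbox lo hi. G' y = G y)"
proof (cases "lo$k = \<alpha>")
  case True
  have "(\<chi> i. if i = k then \<alpha> else lo$i) = lo" using True by (simp add: vec_eq_iff)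
  then show ?thesis using G by auto
next
  case False
  then have lt: "\<alpha> < lo$k" using le by simp
  define n where "n = - axis k (1::real)"
  define w where "w = (lo$k - \<alpha>) *\<^sub>R (- axis k (1::real))"
  define c0 where "c0 = - lo$k"
  have nw: "n \<bullet> w > 0" unfolding n_def w_def using lt by (simp add: inner_axis_axis)
  have ny: "\<And>y. n \<bullet> y = - y$k" unfolding n_def by (simp add: inner_axis')
  have wi: "\<And>i. w$i = (if i = k then \<alpha> - lo$k else 0)" unfolding w_def by (simp add: axis_def)
  have Bn: "\<forall>y\<in>cbox lo hi. n \<bullet> y \<le> c0" unfolding ny c0_def by (simp add: mem_box_cart)
  have P: "PLC (cbox lo hi \<union> sl w (cbox lo hi \<inter> {y. n \<bullet> y = c0}))
              (\<lambda>y. G (y - max 0 ((n \<bullet> y - c0) / (n \<bullet> w)) *\<^sub>R w))"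
    by (rule PLC_ext[OF G Bn nw])
  have eq: "cbox lo hi \<union> sl w (cbox lo hi \<inter> {y. n \<bullet> y = c0}) = cbox (\<chi> i. if i = k then \<alpha> else lo$i) hi"
  proof
    show "cbox lo hi \<union> sl w (cbox lo hi \<inter> {y. n \<bullet> y = c0}) \<subseteq> cbox (\<chi> i. if i = k then \<alpha> else lo$i) hi"
    proof
      fix y assume "y \<in> cbox lo hi \<union> sl w (cbox lo hi \<inter> {y. n \<bullet> y = c0})"
      then consider "y \<in> cbox lo hi" | z t where "z \<in> cbox lo hi" "z$k = lo$k" "0 \<le> t" "t \<le> 1" "y = z + t *\<^sub>R w"
        unfolding Un_iff sl_mem Int_iff mem_Collect_eq ny c0_def by auto
      then show "y \<in> cbox (\<chi> i. if i = k then \<alpha> else lo$i) hi"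
      proof cases
        case 1 then show ?thesis using le unfolding mem_box_cart by (auto simp: vec_lambda_beta) (meson order_trans)
      next
        case 2
        have "\<forall>i. (if i = k then \<alpha> else lo$i) \<le> y$i \<and> y$i \<le> hi$i"
        proof
          fix i
          have zi: "lo$i \<le> z$i" "z$i \<le> hi$i" using 2(1) unfolding mem_box_cart by auto
          show "(if i = k then \<alpha> else lo$i) \<le> y$i \<and> y$i \<le> hi$i"
          proof (cases "i = k")
            case True
            have "y$i = lo$k - t * (lo$k - \<alpha>)" using 2 True wi by (simp add: algebra_simps)
            moreover have "t * (lo$k - \<alpha>) \<le> 1 * (lo$k - \<alpha>)" using 2(4) lt by (intro mult_right_mono) auto
            moreover have "t * (lo$k - \<alpha>) \<ge> 0" using 2(3) lt by simp
            ultimately show ?thesis using zi True 2(2) by auto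
          next
            case False
            then have "y$i = z$i" using 2 wi by simp
            then show ?thesis using zi False by simp
          qed
        qed
        then show ?thesis unfolding mem_box_cart by simp
      qed
    qed
  next
    show "cbox (\<chi> i. if i = k then \<alpha> else lo$i) hi \<subseteq> cbox lo hi \<union> sl w (cbox lo hi \<inter> {y. n \<bullet> y = c0})"
    proof
      fix y assume y: "y \<in> cbox (\<chi> i. if i = k then \<alpha> else lo$i) hi"
      then have yi: "\<And>i. (if i = k then \<alpha> else lo$i) \<le> y$i \<and> y$i \<le> hi$i" unfolding mem_box_cart by auto
      show "y \<in> cbox lo hi \<union> sl w (cbox lo hi \<inter> {y. n \<bullet> y = c0})"
      proof (cases "lo$k \<le> y$k")
        case True
        have "y \<in> cbox lo hi" unfolding mem_box_cart
        proof
          fix i show "lo$i \<le> y$i \<and> y$i \<le> hi$i" using yi[of i] True by (cases "i = k") auto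
        qed
        then show ?thesis by blast
      next
        case False
        define t where "t = (lo$k - y$k) / (lo$k - \<alpha>)"
        define z where "z = y - t *\<^sub>R w"
        have t01: "0 \<le> t" "t \<le> 1" unfolding t_def using False lt yi[of k] by (auto simp: divide_le_eq_1)
        have zk: "z$k = lo$k" unfolding z_def t_def using lt wi by (simp add: field_simps)
        have zi: "\<And>i. i \<noteq> k \<Longrightarrow> z$i = y$i" unfolding z_def using wi by simp
        have zB: "z \<in> cbox lo hi" unfolding mem_box_cart
        proof
          fix i show "lo$i \<le> z$i \<and> z$i \<le> hi$i"
          proof (cases "i = k")
            case True then show ?thesis using zk yi[of k] False ord by auto
          next
            case F: False then show ?thesis using zi[OF F] yi[of i] by auto
          qed
        qed
        have "z \<in> cbox lo hi \<inter> {y. n \<bullet> y = c0}" using zB zk unfolding ny c0_def by simp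
        moreover have "y = z + t *\<^sub>R w" unfolding z_def by simp
        ultimately have "y \<in> sl w (cbox lo hi \<inter> {y. n \<bullet> y = c0})" unfolding sl_mem using t01 by blast
        then show ?thesis by blast
      qed
    qed
  qed
  have agree: "\<forall>y\<in>cbox lo hi. G (y - max 0 ((n \<bullet> y - c0) / (n \<bullet> w)) *\<^sub>R w) = G y"
  proof
    fix y assume "y \<in> cbox lo hi"
    then have "n \<bullet> y \<le> c0" using Bn by blast
    then have "y - max 0 ((n \<bullet> y - c0) / (n \<bullet> w)) *\<^sub>R w = y" by (rule proj_B[OF _ nw])
    then show "G (y - max 0 ((n \<bullet> y - c0) / (n \<bullet> w)) *\<^sub>R w) = G y" by (rule arg_cong[where f=G])
  qed
  show ?thesis using P agree unfolding eq by blast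
qed


lemma two_cases: "P (1::2) \<Longrightarrow> P 2 \<Longrightarrow> P i"
  using exhaust_2[of i] by auto

lemma box_sub:
  fixes lo hi lo' hi' :: "real^2"
  assumes "\<forall>i. lo'$i \<le> lo$i" "\<forall>i. hi$i \<le> hi'$i"
  shows "cbox lo hi \<subseteq> cbox lo' hi'"
proof
  fix x assume "x \<in> cbox lo hi"
  then have xi: "\<And>i. lo$i \<le> x$i \<and> x$i \<le> hi$i" unfolding mem_box_cart by blast
  have "\<And>i. lo'$i \<le> x$i \<and> x$i \<le> hi'$i"
  proof -
    fix i show "lo'$i \<le> x$i \<and> x$i \<le> hi'$i" using xi[of i] assms by (meson order_trans)
  qed
  then show "x \<in> cbox lo' hi'" unfolding mem_box_cart by blast
qed

lemma box_extend:
  fixes lo hi lo' hi' :: "real^2"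
  assumes G: "PLC (cbox lo hi) G" and ord: "\<forall>i. lo$i \<le> hi$i"
    and l: "\<forall>i. lo'$i \<le> lo$i" and h: "\<forall>i. hi$i \<le> hi'$i"
  shows "\<exists>G'. PLC (cbox lo' hi') G' \<and> (\<forall>y\<in>cbox lo hi. G' y = G y)"
proof -
  define h1 :: "real^2" where "h1 = (\<chi> i. if i = 1 then hi'$1 else hi$i)"
  obtain G1 where G1: "PLC (cbox lo h1) G1" "\<forall>y\<in>cbox lo hi. G1 y = G y"
    using box_up[OF G _ ord, where k=1 and \<beta>="hi'$1"] h unfolding h1_def by blast
  have ord1: "\<forall>i. lo$i \<le> h1$i" unfolding h1_def using ord h by (auto intro: order_trans)
  have eq2: "(\<chi> i. if i = 2 then hi'$2 else h1$i) = hi'"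
    unfolding h1_def vec_eq_iff by (rule allI, rule two_cases) auto
  obtain G2 where G2: "PLC (cbox lo hi') G2" "\<forall>y\<in>cbox lo h1. G2 y = G1 y"
  proof -
    have "h1$2 \<le> hi'$2" unfolding h1_def using h by simp
    from box_up[OF G1(1) this ord1] show ?thesis using that unfolding eq2 by blast
  qed
  have ord2: "\<forall>i. lo$i \<le> hi'$i" using ord h by (auto intro: order_trans)
  define l1 :: "real^2" where "l1 = (\<chi> i. if i = 1 then lo'$1 else lo$i)"
  obtain G3 where G3: "PLC (cbox l1 hi') G3" "\<forall>y\<in>cbox lo hi'. G3 y = G2 y"
    using box_down[OF G2(1) _ ord2, where k=1 and \<alpha>="lo'$1"] l unfolding l1_def by blast
  have ord3: "\<forall>i. l1$i \<le> hi'$i" unfolding l1_def using ord2 l by (auto intro: order_trans)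
  have eq4: "(\<chi> i. if i = 2 then lo'$2 else l1$i) = lo'"
    unfolding l1_def vec_eq_iff by (rule allI, rule two_cases) auto
  obtain G4 where G4: "PLC (cbox lo' hi') G4" "\<forall>y\<in>cbox l1 hi'. G4 y = G3 y"
  proof -
    have "lo'$2 \<le> l1$2" unfolding l1_def using l by simp
    from box_down[OF G3(1) this ord3] show ?thesis using that unfolding eq4 by blast
  qed
  have s1: "cbox lo hi \<subseteq> cbox lo h1" by (rule box_sub) (use h in \<open>auto simp: h1_def\<close>)
  have s2: "cbox lo h1 \<subseteq> cbox lo hi'" by (rule box_sub) (use h in \<open>auto simp: h1_def\<close>)
  have s3: "cbox lo hi' \<subseteq> cbox l1 hi'" by (rule box_sub) (use l in \<open>auto simp: l1_def\<close>)
  have "\<forall>y\<in>cbox lo hi. G4 y = G y"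
  proof
    fix y assume y: "y \<in> cbox lo hi"
    then have "y \<in> cbox lo h1" "y \<in> cbox lo hi'" "y \<in> cbox l1 hi'" using s1 s2 s3 by auto
    then show "G4 y = G y" using G1(2) G2(2) G3(2) G4(2) y by simp
  qed
  then show ?thesis using G4(1) by blast
qed

lemma cube_ext:
  assumes K: "closed_cube K" and G: "PLC K G" and sub: "K \<subseteq> cbox lo' hi'"
  shows "\<exists>G'. PLC (cbox lo' hi') G' \<and> (\<forall>y\<in>K. G' y = G y)"
proof -
  obtain a d where ad: "d > 0" "K = cbox a (a + (\<chi> i. d))" using K unfolding closed_cube_def by blast
  have ord: "\<forall>i. a$i \<le> (a + (\<chi> i. d))$i" using ad(1) by simp
  have "a \<in> K" "a + (\<chi> i. d) \<in> K" unfolding ad(2) mem_box_cart using ad(1) by auto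
  then have "a \<in> cbox lo' hi'" "a + (\<chi> i. d) \<in> cbox lo' hi'" using sub by auto
  then have l: "\<forall>i. lo'$i \<le> a$i" and h: "\<forall>i. (a + (\<chi> i. d))$i \<le> hi'$i"
    unfolding mem_box_cart by auto
  show ?thesis using box_extend[OF G[unfolded ad(2)] ord l h] unfolding ad(2) by blast
qed

lemma common_cube:
  assumes "closed_cube K1" "closed_cube K2"
  shows "\<exists>L. closed_cube L \<and> K1 \<subseteq> L \<and> K2 \<subseteq> L"
proof -
  obtain a1 d1 where ad1: "d1 > 0" "K1 = cbox a1 (a1 + (\<chi> i. d1))" using assms(1) unfolding closed_cube_def by blast
  obtain a2 d2 where ad2: "d2 > 0" "K2 = cbox a2 (a2 + (\<chi> i. d2))" using assms(2) unfolding closed_cube_def by blast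
  define m where "m = min (min (a1$1) (a1$2)) (min (a2$1) (a2$2))"
  define M where "M = max (max (a1$1 + d1) (a1$2 + d1)) (max (a2$1 + d2) (a2$2 + d2))"
  have mi: "\<And>i. m \<le> a1$i \<and> m \<le> a2$i" unfolding m_def by (rule two_cases) auto
  have Mi: "\<And>i. a1$i + d1 \<le> M \<and> a2$i + d2 \<le> M" unfolding M_def by (rule two_cases) auto
  have mM: "m < M" using mi[of 1] Mi[of 1] ad1(1) by linarith
  define L :: "(real^2) set" where "L = cbox (\<chi> i. m) ((\<chi> i. m) + (\<chi> i. M - m))"
  have cL: "closed_cube L" unfolding closed_cube_def L_def using mM by (intro exI[of _ "\<chi> i. m"] exI[of _ "M - m"]) auto
  have "K1 \<subseteq> L"
  proof
    fix y assume "y \<in> K1"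
    then have yi: "\<And>i. a1$i \<le> y$i \<and> y$i \<le> a1$i + d1" unfolding ad1(2) mem_box_cart by auto
    have "\<And>i. (\<chi> i. m) $ i \<le> y $ i \<and> y $ i \<le> ((\<chi> i. m) + (\<chi> i. M - m)) $ i"
    proof -
      fix i show "(\<chi> i. m) $ i \<le> y $ i \<and> y $ i \<le> ((\<chi> i. m) + (\<chi> i. M - m)) $ i"
        using yi[of i] mi[of i] Mi[of i] by auto
    qed
    then show "y \<in> L" unfolding L_def mem_box_cart by blast
  qed
  moreover have "K2 \<subseteq> L"
  proof
    fix y assume "y \<in> K2"
    then have yi: "\<And>i. a2$i \<le> y$i \<and> y$i \<le> a2$i + d2" unfolding ad2(2) mem_box_cart by auto
    have "\<And>i. (\<chi> i. m) $ i \<le> y $ i \<and> y $ i \<le> ((\<chi> i. m) + (\<chi> i. M - m)) $ i"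
    proof -
      fix i show "(\<chi> i. m) $ i \<le> y $ i \<and> y $ i \<le> ((\<chi> i. m) + (\<chi> i. M - m)) $ i"
        using yi[of i] mi[of i] Mi[of i] by auto
    qed
    then show "y \<in> L" unfolding L_def mem_box_cart by blast
  qed
  ultimately show ?thesis using cL by blast
qed

lemma cube_is_box: "closed_cube L \<Longrightarrow> \<exists>lo hi. L = cbox lo hi"
  unfolding closed_cube_def by blast

lemma RX_add:
  assumes "f \<in> RX X" "h \<in> RX X"
  shows "(\<lambda>y. f y + h y) \<in> RX X"
proof -
  obtain K1 G1 where K1: "closed_cube K1" "X \<subseteq> K1" "piecewise_linear_on K1 G1"
      "\<forall>y. f y = (if y \<in> X then G1 y else 0)" using assms(1) unfolding RX_def by blast
  obtain K2 G2 where K2: "closed_cube K2" "X \<subseteq> K2" "piecewise_linear_on K2 G2"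
      "\<forall>y. h y = (if y \<in> X then G2 y else 0)" using assms(2) unfolding RX_def by blast
  obtain L where L: "closed_cube L" "K1 \<subseteq> L" "K2 \<subseteq> L" using common_cube[OF K1(1) K2(1)] by blast
  obtain lo hi where Lb: "L = cbox lo hi" using cube_is_box[OF L(1)] by blast
  obtain G1' where G1': "PLC L G1'" "\<forall>y\<in>K1. G1' y = G1 y"
    using cube_ext[OF K1(1) PL_imp_PLC[OF K1(3)]] L(2) unfolding Lb by blast
  obtain G2' where G2': "PLC L G2'" "\<forall>y\<in>K2. G2' y = G2 y"
    using cube_ext[OF K2(1) PL_imp_PLC[OF K2(3)]] L(3) unfolding Lb by blast
  have PL: "piecewise_linear_on L (\<lambda>y. G1' y + G2' y)" by (rule PLC_imp_PL[OF PLC_add[OF G1'(1) G2'(1)]])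
  have "\<forall>y. f y + h y = (if y \<in> X then G1' y + G2' y else 0)"
  proof
    fix y show "f y + h y = (if y \<in> X then G1' y + G2' y else 0)"
    proof (cases "y \<in> X")
      case True
      then have "y \<in> K1" "y \<in> K2" using K1(2) K2(2) by auto
      then show ?thesis using True K1(4) K2(4) G1'(2) G2'(2) by simp
    next
      case False then show ?thesis using K1(4) K2(4) by simp
    qed
  qed
  moreover have "X \<subseteq> L" using K1(2) L(2) by blast
  ultimately show ?thesis unfolding RX_def using L(1) PL by blast
qed

lemma RX_scale:
  assumes "f \<in> RX X"
  shows "(\<lambda>y. c * f y) \<in> RX X"
proof -
  obtain K1 G1 where K1: "closed_cube K1" "X \<subseteq> K1" "piecewise_linear_on K1 G1"
      "\<forall>y. f y = (if y \<in> X then G1 y else 0)" using assms(1) unfolding RX_def by blast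
  have PL: "piecewise_linear_on K1 (\<lambda>y. c * G1 y)" by (rule PLC_imp_PL[OF PLC_scale[OF PL_imp_PLC[OF K1(3)]]])
  have "\<forall>y. c * f y = (if y \<in> X then c * G1 y else 0)" using K1(4) by auto
  then show ?thesis unfolding RX_def using K1(1,2) PL by blast
qed

lemma RX_const:
  assumes "compact X"
  shows "(\<lambda>y. if y \<in> X then c else 0) \<in> RX X"
proof -
  obtain r where r: "\<forall>x\<in>X. norm x \<le> r" using compact_imp_bounded[OF assms] unfolding bounded_iff by blast
  define R where "R = \<bar>r\<bar> + 1"
  define K :: "(real^2) set" where "K = cbox (\<chi> i. - R) ((\<chi> i. - R) + (\<chi> i. 2 * R))"
  have R: "R > 0" unfolding R_def by simp
  have cK: "closed_cube K" unfolding closed_cube_def K_def using R by (intro exI[of _ "\<chi> i. - R"] exI[of _ "2 * R"]) auto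
  have XK: "X \<subseteq> K"
  proof
    fix x assume "x \<in> X"
    then have "\<And>i. \<bar>x$i\<bar> \<le> r" using r component_le_norm_cart order_trans by blast
    moreover have "r \<le> \<bar>r\<bar>" by simp
    ultimately have ab: "\<And>i. \<bar>x$i\<bar> \<le> R" unfolding R_def by (meson add_increasing2 order_trans zero_le_one)
    have "\<And>i. - R \<le> x$i \<and> x$i \<le> R"
    proof -
      fix i show "- R \<le> x$i \<and> x$i \<le> R" using ab[of i] by linarith
    qed
    then show "x \<in> K" unfolding K_def mem_box_cart by simp
  qed
  have "polytope K" unfolding K_def by (rule polytope_interval)
  then have PL: "piecewise_linear_on K (\<lambda>y. c)" by (rule PLC_imp_PL[OF PLC_const])
  show ?thesis unfolding RX_def using cK XK PL by auto
qed


lemma finite_choice_subseq: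
  assumes "finite A" "\<forall>m::nat. \<exists>a\<in>A. Q m a"
  shows "\<exists>a\<in>A. \<exists>r::nat\<Rightarrow>nat. strict_mono r \<and> (\<forall>k. Q (r k) a)"
proof -
  define sel where "sel m = (SOME a. a \<in> A \<and> Q m a)" for m
  have sel: "\<And>m. sel m \<in> A \<and> Q m (sel m)" unfolding sel_def using assms(2) by (metis (mono_tags, lifting) someI_ex)
  have "sel ` UNIV \<subseteq> A" using sel by blast
  then have "finite (sel ` UNIV)" using assms(1) finite_subset by blast
  then obtain m0 where "infinite {m \<in> UNIV. sel m = sel m0}" using pigeonhole_infinite[of UNIV sel] by blast
  then obtain r :: "nat \<Rightarrow> nat" where r: "strict_mono r" "\<forall>n. r n \<in> {m \<in> UNIV. sel m = sel m0}"
    using infinite_enumerate by blast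
  have "\<forall>k. Q (r k) (sel m0)" using r(2) sel by (metis (mono_tags, lifting) mem_Collect_eq)
  moreover have "sel m0 \<in> A" using sel by blast
  ultimately show ?thesis using r(1) by blast
qed

lemma seg_in:
  assumes "convex S" "x \<in> S" "x + t *\<^sub>R u \<in> S" "0 \<le> s" "s \<le> t" "0 < t"
  shows "x + s *\<^sub>R u \<in> S"
proof -
  have "(1 - s/t) *\<^sub>R x + (s/t) *\<^sub>R (x + t *\<^sub>R u) \<in> S"
    using convexD[OF assms(1) assms(2) assms(3), of "1 - s/t" "s/t"] assms(4,5,6) by simp
  moreover have "(1 - s/t) *\<^sub>R x + (s/t) *\<^sub>R (x + t *\<^sub>R u) = x + s *\<^sub>R u"
    using assms(6) by (simp add: algebra_simps)
  ultimately show ?thesis by simp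
qed

lemma cone_lemma:
  fixes C :: "(real^2) set" and x u :: "real^2" and q :: "nat \<Rightarrow> real^2"
  assumes fin: "finite C" and x: "x \<in> convex hull C" and q: "\<forall>k. q k \<in> convex hull C"
    and lim: "(\<lambda>k. (1 / norm (q k - x)) *\<^sub>R (q k - x)) \<longlonglongrightarrow> u" and u: "u \<noteq> 0"
  shows "\<exists>t>0. x + t *\<^sub>R u \<in> convex hull C"
proof -
  define D where "D = (\<lambda>c. (- x) + c) ` C"
  have finD: "finite D" unfolding D_def using fin by simp
  have hD: "convex hull D = (\<lambda>c. (- x) + c) ` (convex hull C)" unfolding D_def by (rule convex_hull_translation)
  have "\<forall>k. (1 / norm (q k - x)) *\<^sub>R (q k - x) \<in> convex_cone hull D"
  proof
    fix k
    have "q k - x \<in> convex hull D" unfolding hD using q by force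
    then have "q k - x \<in> convex_cone hull D" using convex_hull_subset_convex_cone_hull by blast
    then show "(1 / norm (q k - x)) *\<^sub>R (q k - x) \<in> convex_cone hull D" by (rule convex_cone_hull_mul) simp
  qed
  then have "u \<in> convex_cone hull D"
    by (intro closed_sequentially[OF closed_convex_cone_hull[OF finD] _ lim]) blast
  moreover have "D \<noteq> {}" unfolding D_def using x by auto
  ultimately obtain p c where pc: "p \<in> convex hull D" "c \<ge> 0" "u = c *\<^sub>R p"
    using convex_cone_hull_convex_hull_nonempty by blast
  have c0: "c > 0" using pc u by (cases "c = 0") auto
  obtain y' where y': "y' \<in> convex hull C" "p = - x + y'" using pc(1) unfolding hD by blast
  have "x + (1 / c) *\<^sub>R u = y'" using pc(3) y'(2) c0 by simp
  then show ?thesis using y'(1) c0 by (intro exI[of _ "1/c"]) simp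
qed

lemma alg2:
  fixes c d u v :: "real^2"
  assumes "c \<bullet> u = 0" "d \<bullet> u = 0" "u \<noteq> 0"
  shows "\<bar>d \<bullet> v\<bar> * norm c = \<bar>c \<bullet> v\<bar> * norm d"
proof -
  have cu: "c$1 * u$1 + c$2 * u$2 = 0" and du: "d$1 * u$1 + d$2 * u$2 = 0"
    using assms(1,2) by (simp_all add: inner_vec_def UNIV_2)
  have det1: "(c$1 * d$2 - c$2 * d$1) * u$1 = 0"
  proof -
    have "(c$1 * d$2 - c$2 * d$1) * u$1 = d$2 * (c$1 * u$1) - c$2 * (d$1 * u$1)" by (simp add: algebra_simps)
    also have "\<dots> = d$2 * (- (c$2 * u$2)) - c$2 * (- (d$2 * u$2))" using cu du
      by (metis add_eq_0_iff2)
    finally show ?thesis by (simp add: algebra_simps)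
  qed
  have det2: "(c$1 * d$2 - c$2 * d$1) * u$2 = 0"
  proof -
    have "(c$1 * d$2 - c$2 * d$1) * u$2 = c$1 * (d$2 * u$2) - d$1 * (c$2 * u$2)" by (simp add: algebra_simps)
    also have "\<dots> = c$1 * (- (d$1 * u$1)) - d$1 * (- (c$1 * u$1))" using cu du
      by (metis add_eq_0_iff2 add.commute)
    finally show ?thesis by (simp add: algebra_simps)
  qed
  have "u$1 \<noteq> 0 \<or> u$2 \<noteq> 0" using assms(3) by (metis exhaust_2 vec_eq_iff zero_index)
  then have det: "c$1 * d$2 - c$2 * d$1 = 0" using det1 det2 by auto
  have "(d \<bullet> v) *\<^sub>R c = (c \<bullet> v) *\<^sub>R d"
  proof -
    have e1: "(d \<bullet> v) * c$1 = (c \<bullet> v) * d$1"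
    proof -
      have "(d \<bullet> v) * c$1 - (c \<bullet> v) * d$1 = v$2 * (c$1 * d$2 - c$2 * d$1)"
        by (simp add: inner_vec_def UNIV_2 algebra_simps)
      then show ?thesis using det by simp
    qed
    have e2: "(d \<bullet> v) * c$2 = (c \<bullet> v) * d$2"
    proof -
      have "(d \<bullet> v) * c$2 - (c \<bullet> v) * d$2 = - (v$1 * (c$1 * d$2 - c$2 * d$1))"
        by (simp add: inner_vec_def UNIV_2 algebra_simps)
      then show ?thesis using det by simp
    qed
    show ?thesis unfolding vec_eq_iff
    proof
      fix i :: 2 show "((d \<bullet> v) *\<^sub>R c) $ i = ((c \<bullet> v) *\<^sub>R d) $ i"
        using e1 e2 exhaust_2[of i] by auto
    qed
  qed
  then have "norm ((d \<bullet> v) *\<^sub>R c) = norm ((c \<bullet> v) *\<^sub>R d)" by simp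
  then show ?thesis by simp
qed


lemma simplex_hull: "n simplex T \<Longrightarrow> \<exists>C. finite C \<and> T = convex hull C"
  by (auto simp: simplex)

lemma core:
  fixes X :: "(real^2) set" and f g :: "real^2 \<Rightarrow> real"
  assumes cX: "compact X"
    and noout: "\<not> (\<exists>x\<in>X. \<exists>u. outgoing_SB_tangent X x u)"
    and fR: "f \<in> RX X" and gR: "g \<in> RX X"
    and Z: "\<forall>x\<in>X. g x = 0 \<longrightarrow> f x = 0"
  shows "\<exists>m::nat. \<forall>y\<in>X. \<bar>f y\<bar> \<le> real m * \<bar>g y\<bar>"
proof (rule ccontr)
  assume nb: "\<not> (\<exists>m::nat. \<forall>y\<in>X. \<bar>f y\<bar> \<le> real m * \<bar>g y\<bar>)"
  obtain KF F where KF: "closed_cube KF" "X \<subseteq> KF" "piecewise_linear_on KF F"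
      "\<forall>y. f y = (if y \<in> X then F y else 0)" using fR unfolding RX_def by blast
  obtain KG G where KG: "closed_cube KG" "X \<subseteq> KG" "piecewise_linear_on KG G"
      "\<forall>y. g y = (if y \<in> X then G y else 0)" using gR unfolding RX_def by blast
  obtain \<T>F where TF: "triangulation \<T>F" "\<Union>\<T>F = KF" "continuous_on KF F"
      "\<forall>T\<in>\<T>F. \<exists>(c::real^2) (b::real). \<forall>y\<in>T. F y = c \<bullet> y + b"
    using KF(3) unfolding piecewise_linear_on_def by blast
  obtain \<T>G where TG: "triangulation \<T>G" "\<Union>\<T>G = KG" "continuous_on KG G"
      "\<forall>T\<in>\<T>G. \<exists>(c::real^2) (b::real). \<forall>y\<in>T. G y = c \<bullet> y + b"
    using KG(3) unfolding piecewise_linear_on_def by blast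
  have fX: "\<And>y. y \<in> X \<Longrightarrow> f y = F y" using KF(4) by simp
  have gX: "\<And>y. y \<in> X \<Longrightarrow> g y = G y" using KG(4) by simp
  have "\<forall>m::nat. \<exists>y. y \<in> X \<and> real m * \<bar>G y\<bar> < \<bar>F y\<bar>"
  proof
    fix m :: nat
    obtain y where "y \<in> X" "\<not> \<bar>f y\<bar> \<le> real m * \<bar>g y\<bar>" using nb by blast
    then show "\<exists>y. y \<in> X \<and> real m * \<bar>G y\<bar> < \<bar>F y\<bar>" using fX gX by force
  qed
  then obtain y where y: "\<And>m. y m \<in> X" "\<And>m. real m * \<bar>G (y m)\<bar> < \<bar>F (y m)\<bar>"
    using choice[of "\<lambda>m y. y \<in> X \<and> real m * \<bar>G y\<bar> < \<bar>F y\<bar>"] by blast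
  have finP: "finite (\<T>G \<times> \<T>F)" using TG(1) TF(1) unfolding triangulation_def by simp
  have "\<forall>m::nat. \<exists>p\<in>\<T>G \<times> \<T>F. y m \<in> fst p \<and> y m \<in> snd p"
  proof
    fix m
    have "y m \<in> KG" "y m \<in> KF" using y(1) KF(2) KG(2) by auto
    then obtain T T' where "T \<in> \<T>G" "y m \<in> T" "T' \<in> \<T>F" "y m \<in> T'" using TG(2) TF(2) by blast
    then show "\<exists>p\<in>\<T>G \<times> \<T>F. y m \<in> fst p \<and> y m \<in> snd p" by force
  qed
  from finite_choice_subseq[OF finP this] obtain p and r1 :: "nat \<Rightarrow> nat" where
    p: "p \<in> \<T>G \<times> \<T>F" and r1: "strict_mono r1" and r1y: "\<forall>k::nat. y (r1 k) \<in> fst p \<and> y (r1 k) \<in> snd p"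
    by blast
  define T where "T = fst p"
  define T' where "T' = snd p"
  have TT: "T \<in> \<T>G" "T' \<in> \<T>F" using p unfolding T_def T'_def by auto
  have "\<exists>n. n simplex T" using TT(1) TG(1) unfolding triangulation_def by blast
  then obtain C where C: "finite C" "T = convex hull C" using simplex_hull by blast
  have "\<exists>n. n simplex T'" using TT(2) TF(1) unfolding triangulation_def by blast
  then obtain C' where C': "finite C'" "T' = convex hull C'" using simplex_hull by blast
  have clT: "closed T" "closed T'" unfolding C(2) C'(2)
    by (rule compact_imp_closed[OF finite_imp_compact_convex_hull[OF C(1)]],
        rule compact_imp_closed[OF finite_imp_compact_convex_hull[OF C'(1)]])
  have cvT: "convex T" "convex T'" unfolding C(2) C'(2) by (rule convex_convex_hull)+
  obtain c b where cb: "\<forall>z\<in>T. G z = c \<bullet> z + b" using TT(1) TG(4) by blast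
  obtain d e where de: "\<forall>z\<in>T'. F z = d \<bullet> z + e" using TT(2) TF(4) by blast
  have "\<forall>k. (y \<circ> r1) k \<in> X" using y(1) by simp
  then obtain x r2 where x: "x \<in> X" and r2: "strict_mono r2" and lim1: "((y \<circ> r1) \<circ> r2) \<longlonglongrightarrow> x"
    using seq_compactE[OF compact_imp_seq_compact[OF cX]] by metis
  define \<rho> where "\<rho> = r1 \<circ> r2"
  have \<rho>: "strict_mono \<rho>" unfolding \<rho>_def using r1 r2 by (rule strict_mono_o)
  define w where "w k = y (\<rho> k)" for k
  have wlim: "w \<longlonglongrightarrow> x" using lim1 unfolding w_def \<rho>_def by (simp add: o_def)
  have wT: "\<And>k. w k \<in> T" "\<And>k. w k \<in> T'" using r1y unfolding w_def \<rho>_def T_def T'_def by auto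
  have xT: "x \<in> T" by (rule closed_sequentially[OF clT(1) wT(1) wlim])
  have xT': "x \<in> T'" by (rule closed_sequentially[OF clT(2) wT(2) wlim])
  obtain aF dF where adF: "dF > 0" "KF = cbox aF (aF + (\<chi> i. dF))" using KF(1) unfolding closed_cube_def by blast
  have "compact (F ` KF)" unfolding adF(2) by (rule compact_continuous_image[OF TF(3)[unfolded adF(2)] compact_cbox])
  then obtain B where B: "\<forall>z\<in>F ` KF. norm z \<le> B" using compact_imp_bounded bounded_iff by metis
  have FB: "\<And>z. z \<in> X \<Longrightarrow> \<bar>F z\<bar> \<le> B" using B KF(2) by force
  have Gbound: "\<forall>k\<ge>1. \<bar>G (w k)\<bar> \<le> B * inverse (real k)"
  proof (intro allI impI)
    fix k :: nat assume k: "k \<ge> 1"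
    have "real k \<le> real (\<rho> k)" using seq_suble[OF \<rho>] by simp
    then have "real k * \<bar>G (w k)\<bar> \<le> real (\<rho> k) * \<bar>G (w k)\<bar>" by (simp add: mult_right_mono)
    also have "\<dots> < \<bar>F (w k)\<bar>" using y(2) unfolding w_def by blast
    also have "\<dots> \<le> B" using FB y(1) unfolding w_def by blast
    finally have "real k * \<bar>G (w k)\<bar> \<le> B" by simp
    then show "\<bar>G (w k)\<bar> \<le> B * inverse (real k)" using k by (simp add: field_simps)
  qed
  have "(\<lambda>k. \<bar>G (w k)\<bar>) \<longlonglongrightarrow> \<bar>G x\<bar>"
  proof (rule tendsto_rabs)
    show "(\<lambda>k. G (w k)) \<longlonglongrightarrow> G x"
      by (rule continuous_on_tendsto_compose[OF TG(3) wlim]) (use x KG(2) y(1) in \<open>auto simp: w_def intro!: always_eventually\<close>)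
  qed
  moreover have "(\<lambda>k. B * inverse (real k)) \<longlonglongrightarrow> B * 0"
    by (rule tendsto_mult[OF tendsto_const lim_inverse_n])
  ultimately have "\<bar>G x\<bar> \<le> B * 0" using Gbound by (intro LIMSEQ_le) auto
  then have Gx: "G x = 0" by simp
  then have "g x = 0" using gX x by simp
  then have "f x = 0" using Z x by blast
  then have Fx: "F x = 0" using fX x by simp
  have bx: "b = - (c \<bullet> x)" using cb xT Gx by force
  have ex: "e = - (d \<bullet> x)" using de xT' Fx by force
  have Gaff: "\<And>z. z \<in> T \<Longrightarrow> G z = c \<bullet> (z - x)" using cb bx by (simp add: inner_diff_right)
  have Faff: "\<And>z. z \<in> T' \<Longrightarrow> F z = d \<bullet> (z - x)" using de ex by (simp add: inner_diff_right)
  have wne: "\<And>k. w k \<noteq> x"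
  proof
    fix k assume "w k = x"
    moreover have "real (\<rho> k) * \<bar>G (w k)\<bar> < \<bar>F (w k)\<bar>" using y(2) unfolding w_def by blast
    ultimately show False using Fx Gx by simp
  qed
  define v where "v k = (1 / norm (w k - x)) *\<^sub>R (w k - x)" for k
  have "\<forall>k. v k \<in> sphere 0 1" unfolding v_def using wne by (simp add: norm_divide)
  then obtain u r3 where u: "u \<in> sphere (0::real^2) 1" and r3: "strict_mono r3" and vlim: "(v \<circ> r3) \<longlonglongrightarrow> u"
    using seq_compactE[OF compact_imp_seq_compact[OF compact_sphere]] by metis
  have nu: "norm u = 1" using u by simp
  then have u0: "u \<noteq> 0" by auto
  define \<sigma> where "\<sigma> = \<rho> \<circ> r3"
  have \<sigma>: "strict_mono \<sigma>" unfolding \<sigma>_def using \<rho> r3 by (rule strict_mono_o)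
  define q where "q k = w (r3 k)" for k
  have qX: "\<And>k. q k \<in> X" unfolding q_def w_def using y(1) by simp
  have qT: "\<And>k. q k \<in> T" "\<And>k. q k \<in> T'" unfolding q_def using wT by auto
  have qne: "\<And>k. q k \<noteq> x" unfolding q_def using wne by simp
  have qlim: "q \<longlonglongrightarrow> x" unfolding q_def using LIMSEQ_subseq_LIMSEQ[OF wlim r3] by (simp add: o_def)
  define vv where "vv k = (1 / norm (q k - x)) *\<^sub>R (q k - x)" for k
  have vvlim: "vv \<longlonglongrightarrow> u" using vlim unfolding vv_def q_def v_def by (simp add: o_def)
  have qineq: "\<And>k. real (\<sigma> k) * \<bar>G (q k)\<bar> < \<bar>F (q k)\<bar>"
    using y(2) unfolding q_def w_def \<sigma>_def by simp
  have SB: "SB_tangent X x u"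
    unfolding SB_tangent_def using nu qX qne qlim vvlim unfolding vv_def by blast
  have nvv: "\<And>k. norm (vv k) = 1" unfolding vv_def using qne by (simp add: norm_divide)
  have dirineq: "\<And>k. real (\<sigma> k) * \<bar>c \<bullet> vv k\<bar> < \<bar>d \<bullet> vv k\<bar>"
  proof -
    fix k
    define l where "l = norm (q k - x)"
    have l: "l > 0" unfolding l_def using qne by simp
    have qv: "q k - x = l *\<^sub>R vv k" unfolding vv_def l_def using qne by simp
    have "G (q k) = l * (c \<bullet> vv k)" using Gaff[OF qT(1)] qv by simp
    moreover have "F (q k) = l * (d \<bullet> vv k)" using Faff[OF qT(2)] qv by simp
    ultimately have "real (\<sigma> k) * (l * \<bar>c \<bullet> vv k\<bar>) < l * \<bar>d \<bullet> vv k\<bar>"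
      using qineq[of k] l by (simp add: abs_mult)
    then have "l * (real (\<sigma> k) * \<bar>c \<bullet> vv k\<bar>) < l * \<bar>d \<bullet> vv k\<bar>" by (simp add: algebra_simps)
    then show "real (\<sigma> k) * \<bar>c \<bullet> vv k\<bar> < \<bar>d \<bullet> vv k\<bar>" using l by simp
  qed
  have cbound: "\<forall>k\<ge>1. \<bar>c \<bullet> vv k\<bar> \<le> norm d * inverse (real k)"
  proof (intro allI impI)
    fix k :: nat assume k: "k \<ge> 1"
    have "real k \<le> real (\<sigma> k)" using seq_suble[OF \<sigma>] by simp
    then have "real k * \<bar>c \<bullet> vv k\<bar> \<le> real (\<sigma> k) * \<bar>c \<bullet> vv k\<bar>" by (simp add: mult_right_mono)
    also have "\<dots> < \<bar>d \<bullet> vv k\<bar>" by (rule dirineq)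
    also have "\<dots> \<le> norm d * norm (vv k)" by (rule Cauchy_Schwarz_ineq2)
    also have "\<dots> = norm d" using nvv by simp
    finally have "real k * \<bar>c \<bullet> vv k\<bar> \<le> norm d" by simp
    then show "\<bar>c \<bullet> vv k\<bar> \<le> norm d * inverse (real k)" using k by (simp add: field_simps)
  qed
  have "(\<lambda>k. \<bar>c \<bullet> vv k\<bar>) \<longlonglongrightarrow> \<bar>c \<bullet> u\<bar>"
    by (rule tendsto_rabs[OF tendsto_inner[OF tendsto_const vvlim]])
  moreover have "(\<lambda>k. norm d * inverse (real k)) \<longlonglongrightarrow> norm d * 0"
    by (rule tendsto_mult[OF tendsto_const lim_inverse_n])
  ultimately have "\<bar>c \<bullet> u\<bar> \<le> norm d * 0" using cbound by (intro LIMSEQ_le) auto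
  then have cu: "c \<bullet> u = 0" by simp
  have qC: "\<forall>k. q k \<in> convex hull C" "\<forall>k. q k \<in> convex hull C'" using qT C(2) C'(2) by blast+
  obtain tT where tT: "tT > 0" "x + tT *\<^sub>R u \<in> T"
    using cone_lemma[OF C(1) xT[unfolded C(2)] qC(1) vvlim[unfolded vv_def] u0]
    unfolding C(2) by blast
  obtain tT' where tT': "tT' > 0" "x + tT' *\<^sub>R u \<in> T'"
    using cone_lemma[OF C'(1) xT'[unfolded C'(2)] qC(2) vvlim[unfolded vv_def] u0]
    unfolding C'(2) by blast
  define t0 where "t0 = min tT tT'"
  have t0: "t0 > 0" "t0 \<le> tT" "t0 \<le> tT'" unfolding t0_def using tT tT' by auto
  have segT: "\<And>s. 0 \<le> s \<Longrightarrow> s \<le> t0 \<Longrightarrow> x + s *\<^sub>R u \<in> T \<inter> T'"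
    using seg_in[OF cvT(1) xT tT(2)] seg_in[OF cvT(2) xT' tT'(2)] t0 tT(1) tT'(1) by auto
  have "\<not> outgoing_SB_tangent X x u" using noout x by blast
  then have "\<not> (\<exists>\<mu>>0. closed_segment x (x + \<mu> *\<^sub>R u) \<inter> X = {x})"
    using SB unfolding outgoing_SB_tangent_def by blast
  then have "closed_segment x (x + t0 *\<^sub>R u) \<inter> X \<noteq> {x}" using t0(1) by blast
  moreover have "x \<in> closed_segment x (x + t0 *\<^sub>R u) \<inter> X" using x by simp
  ultimately obtain z where z: "z \<in> closed_segment x (x + t0 *\<^sub>R u)" "z \<in> X" "z \<noteq> x" by blast
  obtain \<theta> where th: "0 \<le> \<theta>" "\<theta> \<le> 1" "z = (1 - \<theta>) *\<^sub>R x + \<theta> *\<^sub>R (x + t0 *\<^sub>R u)"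
    using z(1) unfolding in_segment by blast
  define s where "s = \<theta> * t0"
  have zs: "z = x + s *\<^sub>R u" unfolding s_def th(3) by (simp add: algebra_simps)
  have s: "0 \<le> s" "s \<le> t0" unfolding s_def using th t0 by (auto simp: mult_le_cancel_right1)
  have s0: "s \<noteq> 0" using z(3) zs by auto
  have zT: "z \<in> T" "z \<in> T'" using segT[OF s] zs by auto
  have "G z = s * (c \<bullet> u)" using Gaff[OF zT(1)] zs by simp
  then have "G z = 0" using cu by simp
  then have "g z = 0" using gX z(2) by simp
  then have "f z = 0" using Z z(2) by blast
  then have "F z = 0" using fX z(2) by simp
  moreover have "F z = s * (d \<bullet> u)" using Faff[OF zT(2)] zs by simp
  ultimately have du: "d \<bullet> u = 0" using s0 by simp
  have key: "\<And>k. \<bar>d \<bullet> vv k\<bar> * norm c = \<bar>c \<bullet> vv k\<bar> * norm d" by (rule alg2[OF cu du u0])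
  show False
  proof (cases "c = 0")
    case True
    have "G (q 0) = 0" using Gaff[OF qT(1)] True by simp
    then have "g (q 0) = 0" using gX qX by simp
    then have "f (q 0) = 0" using Z qX by blast
    then have "F (q 0) = 0" using fX qX by simp
    then show False using qineq[of 0] \<open>G (q 0) = 0\<close> by simp
  next
    case False
    then have nc: "norm c > 0" by simp
    obtain k :: nat where k: "norm d / norm c \<le> real k" using real_arch_simple by blast
    have "norm d \<le> real k * norm c" using k nc by (simp add: field_simps)
    then have "\<bar>c \<bullet> vv k\<bar> * norm d \<le> \<bar>c \<bullet> vv k\<bar> * (real k * norm c)" by (simp add: mult_left_mono)
    then have "\<bar>d \<bullet> vv k\<bar> * norm c \<le> (real k * \<bar>c \<bullet> vv k\<bar>) * norm c" using key[of k] by (simp add: algebra_simps)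
    then have "\<bar>d \<bullet> vv k\<bar> \<le> real k * \<bar>c \<bullet> vv k\<bar>" using nc by simp
    also have "\<dots> \<le> real (\<sigma> k) * \<bar>c \<bullet> vv k\<bar>" using seq_suble[OF \<sigma>, of k] by (simp add: mult_right_mono)
    also have "\<dots> < \<bar>d \<bullet> vv k\<bar>" by (rule dirineq)
    finally show False by simp
  qed
qed


definition Mx :: "(real^2) set \<Rightarrow> real^2 \<Rightarrow> (real^2 \<Rightarrow> real) set" where
  "Mx X x = {f \<in> RX X. f x = 0}"

lemma zero_RX: assumes "compact X" shows "(\<lambda>y. 0) \<in> RX X"
proof -
  have "(\<lambda>y. if y \<in> X then (0::real) else 0) \<in> RX X" by (rule RX_const[OF assms])
  then show ?thesis by simp
qed

lemma Mx_ideal: assumes "compact X" "x \<in> X" shows "riesz_ideal X (Mx X x)"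
  unfolding riesz_ideal_def
proof (intro conjI ballI allI impI)
  show "Mx X x \<subseteq> RX X" unfolding Mx_def by blast
  show "(\<lambda>y. 0) \<in> Mx X x" unfolding Mx_def using zero_RX[OF assms(1)] by simp
next
  fix f g assume "f \<in> Mx X x" "g \<in> Mx X x"
  then show "(\<lambda>y. f y + g y) \<in> Mx X x" unfolding Mx_def using RX_add by simp
next
  fix f c assume "f \<in> Mx X x"
  then show "(\<lambda>y. c * f y) \<in> Mx X x" unfolding Mx_def using RX_scale by simp
next
  fix f g assume f: "f \<in> RX X" and g: "g \<in> Mx X x" and le: "\<forall>y\<in>X. \<bar>f y\<bar> \<le> \<bar>g y\<bar>"
  have "\<bar>f x\<bar> \<le> \<bar>g x\<bar>" using le assms(2) by blast
  then have "f x = 0" using g unfolding Mx_def by simp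
  then show "f \<in> Mx X x" unfolding Mx_def using f by simp
qed

lemma Mx_maximal: assumes "compact X" "x \<in> X" shows "maximal_ideal X (Mx X x)"
  unfolding maximal_ideal_def
proof (intro conjI allI impI)
  show "riesz_ideal X (Mx X x)" by (rule Mx_ideal[OF assms])
  have "(\<lambda>y. if y \<in> X then 1 else 0) \<in> RX X" by (rule RX_const[OF assms(1)])
  moreover have "(\<lambda>y. if y \<in> X then (1::real) else 0) \<notin> Mx X x" unfolding Mx_def using assms(2) by simp
  ultimately show "Mx X x \<noteq> RX X" by blast
next
  fix J assume J: "riesz_ideal X J \<and> Mx X x \<subseteq> J"
  show "J = Mx X x \<or> J = RX X"
  proof (cases "J = Mx X x")
    case True then show ?thesis by simp
  next
    case False
    have JR: "J \<subseteq> RX X" using J unfolding riesz_ideal_def by blast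
    have Jadd: "\<And>f g. f \<in> J \<Longrightarrow> g \<in> J \<Longrightarrow> (\<lambda>y. f y + g y) \<in> J" using J unfolding riesz_ideal_def by blast
    have Jsc: "\<And>f c. f \<in> J \<Longrightarrow> (\<lambda>y. c * f y) \<in> J" using J unfolding riesz_ideal_def by blast
    obtain h where h: "h \<in> J" "h \<notin> Mx X x" using False J by blast
    then have hR: "h \<in> RX X" and hx: "h x \<noteq> 0" using JR unfolding Mx_def by auto
    have "RX X \<subseteq> J"
    proof
      fix f assume f: "f \<in> RX X"
      define c where "c = f x / h x"
      define f' where "f' = (\<lambda>y. f y + (- c) * h y)"
      have "f' \<in> RX X" unfolding f'_def by (rule RX_add[OF f RX_scale[OF hR]])
      moreover have "f' x = 0" unfolding f'_def c_def using hx by simp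
      ultimately have "f' \<in> J" using J unfolding Mx_def by blast
      then have "(\<lambda>y. f' y + c * h y) \<in> J" using Jadd Jsc h(1) by blast
      moreover have "(\<lambda>y. f' y + c * h y) = f" unfolding f'_def by (rule ext) simp
      ultimately show "f \<in> J" by simp
    qed
    then show ?thesis using JR by blast
  qed
qed

lemma P_eq:
  assumes "compact X" and core: "\<And>f. f \<in> RX X \<Longrightarrow> (\<forall>x\<in>X. g x = 0 \<longrightarrow> f x = 0) \<Longrightarrow>
       \<exists>m::nat. \<forall>y\<in>X. \<bar>f y\<bar> \<le> real m * \<bar>g y\<bar>"
  shows "principal_ideal X g = RX X \<inter> \<Inter>{Mx X x | x. x \<in> X \<and> g x = 0}"
proof
  show "principal_ideal X g \<subseteq> RX X \<inter> \<Inter>{Mx X x | x. x \<in> X \<and> g x = 0}"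
  proof
    fix f assume "f \<in> principal_ideal X g"
    then obtain m :: nat where f: "f \<in> RX X" "\<forall>y\<in>X. \<bar>f y\<bar> \<le> real m * \<bar>g y\<bar>"
      unfolding principal_ideal_def by blast
    have "\<forall>x. x \<in> X \<and> g x = 0 \<longrightarrow> f \<in> Mx X x"
    proof (intro allI impI)
      fix x assume x: "x \<in> X \<and> g x = 0"
      then have "\<bar>f x\<bar> \<le> real m * \<bar>g x\<bar>" using f(2) by blast
      then have "\<bar>f x\<bar> \<le> 0" using x by simp
      then show "f \<in> Mx X x" unfolding Mx_def using f(1) by simp
    qed
    then have "f \<in> \<Inter>{Mx X x | x. x \<in> X \<and> g x = 0}"
    proof (intro InterI)
      fix M assume "\<forall>x. x \<in> X \<and> g x = 0 \<longrightarrow> f \<in> Mx X x" "M \<in> {Mx X x | x. x \<in> X \<and> g x = 0}"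
      then show "f \<in> M" by blast
    qed
    then show "f \<in> RX X \<inter> \<Inter>{Mx X x | x. x \<in> X \<and> g x = 0}" using f(1) by (rule IntI[rotated])
  qed
next
  show "RX X \<inter> \<Inter>{Mx X x | x. x \<in> X \<and> g x = 0} \<subseteq> principal_ideal X g"
  proof
    fix f assume f: "f \<in> RX X \<inter> \<Inter>{Mx X x | x. x \<in> X \<and> g x = 0}"
    have "\<forall>x\<in>X. g x = 0 \<longrightarrow> f x = 0"
    proof (intro ballI impI)
      fix x assume "x \<in> X" "g x = 0"
      then have "Mx X x \<in> {Mx X x | x. x \<in> X \<and> g x = 0}" by blast
      moreover have "f \<in> \<Inter>{Mx X x | x. x \<in> X \<and> g x = 0}" using f by (rule IntD2)
      ultimately have "f \<in> Mx X x" by (rule InterD[rotated])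
      then show "f x = 0" unfolding Mx_def by simp
    qed
    moreover have fR: "f \<in> RX X" using f by (rule IntD1)
    ultimately obtain m :: nat where "\<forall>y\<in>X. \<bar>f y\<bar> \<le> real m * \<bar>g y\<bar>" using core by blast
    then show "f \<in> principal_ideal X g" unfolding principal_ideal_def using fR by blast
  qed
qed

lemma inter_max:
  assumes "compact X" and core: "\<And>f. f \<in> RX X \<Longrightarrow> (\<forall>x\<in>X. g x = 0 \<longrightarrow> f x = 0) \<Longrightarrow>
       \<exists>m::nat. \<forall>y\<in>X. \<bar>f y\<bar> \<le> real m * \<bar>g y\<bar>"
  shows "inter_of_maximal_ideals X (principal_ideal X g)"
  unfolding inter_of_maximal_ideals_def
proof (intro exI conjI)
  show "\<forall>M\<in>{Mx X x | x. x \<in> X \<and> g x = 0}. maximal_ideal X M" using Mx_maximal[OF assms(1)] by blast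
  show "principal_ideal X g = RX X \<inter> \<Inter>{Mx X x | x. x \<in> X \<and> g x = 0}" by (rule P_eq[OF assms])
qed


theorem lemma4p3:
  fixes X :: "(real^2) set"
  assumes "X \<noteq> {}" and "compact X"
    and "\<exists>g\<in>RX X. \<not> inter_of_maximal_ideals X (principal_ideal X g)"
  shows "\<exists>x\<in>X. \<exists>u. outgoing_SB_tangent X x u"
proof (rule ccontr)
  assume no: "\<not> (\<exists>x\<in>X. \<exists>u. outgoing_SB_tangent X x u)"
  obtain g where g: "g \<in> RX X" "\<not> inter_of_maximal_ideals X (principal_ideal X g)"
    using assms(3) by blast
  have core': "\<And>f. f \<in> RX X \<Longrightarrow> (\<forall>x\<in>X. g x = 0 \<longrightarrow> f x = 0) \<Longrightarrow>
       \<exists>m::nat. \<forall>y\<in>X. \<bar>f y\<bar> \<le> real m * \<bar>g y\<bar>"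
    by (rule core[OF assms(2) no _ g(1)])
  have "inter_of_maximal_ideals X (principal_ideal X g)"
    by (rule inter_max[OF assms(2) core'])
  with g(2) show False by simp
qed

end
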